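(* Let $f:\mathbb{N}\to\mathbb{N}$ be an arbitrary non-decreasing function and let $d$ be a positive integer. There exist integers $k_0$ and $n_0$ such that if $T$ is a rooted tree of depth at most $d$ with at least $n_0$ leaves, then for some $k\le k_0$ there exists a vertex $v$ of $T$ that has at least $f(k)$ children, such that the subtree of $T$ rooted at each child of $v$ has at most $k$ leaves. *)

theory Defs
  imports Main
begin

datatype rtree = Node (children: "rtree list")

fun leaves :: "rtree \<Rightarrow> nat" where
  "leaves (Node ts) = (if ts = [] then 1 else sum_list (map leaves ts))"

fun depth :: "rtree \<Rightarrow> nat" where
  "depth (Node ts) = (if ts = [] then 0 else Suc (Max (set (map depth ts))))"

text \<open>The vertices of a tree, each represented by the subtree rooted at it.\<close>
fun vertices :: "rtree \<Rightarrow> rtree set" where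
  "vertices (Node ts) = insert (Node ts) (\<Union>t\<in>set ts. vertices t)"

end

theory Submission
  imports Defs
begin

fun bnd :: "(nat \<Rightarrow> nat) \<Rightarrow> nat \<Rightarrow> nat" where
  "bnd f 0 = 1"
| "bnd f (Suc h) = bnd f h * f (bnd f h) + bnd f h"

lemma bnd_pos: "1 \<le> bnd f h"
  by (induction h) auto

lemma bnd_mono: "i \<le> h \<Longrightarrow> bnd f i \<le> bnd f h"
proof (induction h)
  case 0 then show ?case by simp
next
  case (Suc h)
  have "bnd f h \<le> bnd f (Suc h)" by simp
  then show ?case using Suc by (auto simp: le_Suc_eq)
qed

lemma depth_child: "t \<in> set ts \<Longrightarrow> depth (Node ts) \<le> Suc h \<Longrightarrow> depth t \<le> h"
proof -
  assume a: "t \<in> set ts" "depth (Node ts) \<le> Suc h"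
  then have "ts \<noteq> []" by auto
  then have "depth (Node ts) = Suc (Max (set (map depth ts)))" by simp
  moreover have "depth t \<le> Max (set (map depth ts))" using a(1) by simp
  ultimately show ?thesis using a(2) by simp
qed

lemma sum_bound: "(\<forall>t\<in>set ts. g t \<le> (c::nat)) \<Longrightarrow> sum_list (map g ts) \<le> length ts * c"
  by (induction ts) auto

lemma vert_child: "t \<in> set ts \<Longrightarrow> vertices t \<subseteq> vertices (Node ts)"
  by auto

lemma main:
  "\<And>h. depth T \<le> h \<Longrightarrow> (\<forall>i<h. bnd f i \<le> K) \<Longrightarrow>
   (\<forall>k. 1 \<le> k \<and> k \<le> K \<longrightarrow> \<not>(\<exists>v\<in>vertices T.
              f k \<le> length (children v) \<and> (\<forall>c\<in>set (children v). leaves c \<le> k))) \<Longrightarrow>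
   leaves T \<le> bnd f h"
proof (induction T)
  case (Node ts h)
  show ?case
  proof (cases "ts = []")
    case True then show ?thesis using bnd_pos[of f h] by simp
  next
    case False
    then have "depth (Node ts) \<ge> 1" by simp
    then obtain h' where h: "h = Suc h'" using Node.prems(1)
      by (cases h) auto
    have ch: "leaves t \<le> bnd f h'" if t: "t \<in> set ts" for t
    proof -
      have "depth t \<le> h'" using depth_child[OF t] Node.prems(1) h by simp
      moreover have "\<forall>i<h'. bnd f i \<le> K" using Node.prems(2) h by simp
      moreover have "\<forall>k. 1 \<le> k \<and> k \<le> K \<longrightarrow> \<not>(\<exists>v\<in>vertices t.
              f k \<le> length (children v) \<and> (\<forall>c\<in>set (children v). leaves c \<le> k))"
        using Node.prems(3) vert_child[OF t] by (meson subsetD)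
      ultimately show ?thesis using Node.IH[OF t] by blast
    qed
    have K: "bnd f h' \<le> K" using Node.prems(2) h by simp
    have v: "Node ts \<in> vertices (Node ts)" by simp
    have "\<not>(\<exists>v\<in>vertices (Node ts).
              f (bnd f h') \<le> length (children v) \<and> (\<forall>c\<in>set (children v). leaves c \<le> bnd f h'))"
    proof -
      have "1 \<le> bnd f h' \<and> bnd f h' \<le> K \<longrightarrow> \<not>(\<exists>v\<in>vertices (Node ts).
              f (bnd f h') \<le> length (children v) \<and> (\<forall>c\<in>set (children v). leaves c \<le> bnd f h'))"
        using Node.prems(3) by (rule spec)
      moreover have "1 \<le> bnd f h' \<and> bnd f h' \<le> K" using K bnd_pos[of f h'] by simp
      ultimately show ?thesis by (rule mp)
    qed
    then have "\<not> (f (bnd f h') \<le> length (children (Node ts)) \<and> (\<forall>c\<in>set (children (Node ts)). leaves c \<le> bnd f h'))"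
      using v by blast
    then have "\<not> f (bnd f h') \<le> length ts"
      using ch by simp
    then have len: "length ts \<le> f (bnd f h')" by simp
    have "leaves (Node ts) = sum_list (map leaves ts)" using False by simp
    also have "\<dots> \<le> length ts * bnd f h'" using ch by (intro sum_bound) blast
    also have "\<dots> \<le> f (bnd f h') * bnd f h'" using len by simp
    also have "\<dots> \<le> bnd f h" using h by simp
    finally show ?thesis .
  qed
qed

theorem lemma3p8:
  fixes f :: "nat \<Rightarrow> nat" and d :: nat
  assumes "mono f" and "0 < d"
  shows "\<exists>k0 n0 :: nat. \<forall>T. depth T \<le> d \<and> n0 \<le> leaves T \<longrightarrow>
           (\<exists>k. 1 \<le> k \<and> k \<le> k0 \<and> (\<exists>v\<in>vertices T.
              f k \<le> length (children v) \<and> (\<forall>c\<in>set (children v). leaves c \<le> k)))"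
proof (rule exI[of _ "bnd f d"], rule exI[of _ "Suc (bnd f d)"], intro allI impI)
  fix T assume T: "depth T \<le> d \<and> Suc (bnd f d) \<le> leaves T"
  show "\<exists>k. 1 \<le> k \<and> k \<le> bnd f d \<and> (\<exists>v\<in>vertices T.
              f k \<le> length (children v) \<and> (\<forall>c\<in>set (children v). leaves c \<le> k))"
  proof (rule ccontr)
    assume "\<not> ?thesis"
    then have "leaves T \<le> bnd f d"
      using main[of T d f "bnd f d"] T by (simp add: bnd_mono)
    then show False using T by simp
  qed
qed

end
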